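(* Let $f:\mathbb{R}^d\to\mathbb{R}$ be convex and $L$-smooth (i.e. differentiable with $L$-Lipschitz gradient), with a minimizer $\theta^*$, and let $\hat L\ge L$ and $\gamma_0>0$. Consider the following idealized (P)ARS-OPT iteration, started from $\theta_0\in\mathbb{R}^d$ with $m_0=\theta_0$. At each iteration $t=0,1,\dots,T-1$: (i) a scalar $\zeta_t>0$ is chosen that is measurable with respect to $\mathcal{F}_t$, the $\sigma$-algebra generated by all randomness used before iteration $t$; (ii) $\alpha_t\in(0,1)$ is the positive root of $\alpha_t^2=\zeta_t\gamma_t(1-\alpha_t)$, $\tilde\theta_t=(1-\alpha_t)\theta_t+\alpha_t m_t$, and $\gamma_{t+1}=(1-\alpha_t)\gamma_t$; (iii) a random orthonormal family $\mathbf{v}_t,\mathbf{p}_{t,1},\dots,\mathbf{p}_{t,s}$ ($s\ge 0$) is drawn, and $g_1(\tilde\theta_t)=\nabla f(\tilde\theta_t)^\top\mathbf{v}_t\,\mathbf{v}_t+\sum_{i=1}^s\nabla f(\tilde\theta_t)^\top\mathbf{p}_{t,i}\,\mathbf{p}_{t,i}$ (the orthogonal projection of $\nabla f(\tilde\theta_t)$ onto the span of this family), while $g_2(\tilde\theta_t)$ is a random vector satisfying $\mathbb{E}_t[g_2(\tilde\theta_t)]=\nabla f(\tilde\theta_t)$, where $\mathbb{E}_t$ denotes conditional expectation given $\mathcal{F}_t$; (iv) the step size satisfies $\zeta_t\le \dfrac{\mathbb{E}_t\big[\|g_1(\tilde\theta_t)\|^2\big]}{\hat L\,\mathbb{E}_t\big[\|g_2(\tilde\theta_t)\|^2\big]}$;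 (v) $\theta_{t+1}=\tilde\theta_t-\frac{1}{\hat L}g_1(\tilde\theta_t)$ and $m_{t+1}=m_t-\frac{\zeta_t}{\alpha_t}g_2(\tilde\theta_t)$. Then $$\mathbb{E}\left[\big(f(\theta_T)-f(\theta^* )\big)\left(1+\frac{\sqrt{\gamma_0}}{2}\sum_{t=0}^{T-1}\sqrt{\zeta_t}\right)^2\right]\le f(\theta_0)-f(\theta^* )+\frac{\gamma_0}{2}\|\theta_0-\theta^*\|^2.$$
   Context: In the ARS-OPT case $s=0$ and $g_1(\tilde\theta_t)=\nabla f(\tilde\theta_t)^\top\mathbf{v}_t\,\mathbf{v}_t$ with $\mathbf{v}_t$ a unit vector. $\|\cdot\|$ is the Euclidean norm. *)

theory Defs
  imports "HOL-Analysis.Analysis" "HOL-Probability.Probability"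
begin

end

theory Submission imports Defs begin

lemma line_deriv:
  fixes f :: "'d::euclidean_space \<Rightarrow> real"
  assumes grad: "\<And>z. GDERIV f z :> G z"
  shows "((\<lambda>s. f (x + s *\<^sub>R h)) has_real_derivative (G (x + s *\<^sub>R h) \<bullet> h)) (at s)"
proof -
  have d1: "((\<lambda>s. x + s *\<^sub>R h) has_derivative (\<lambda>t. t *\<^sub>R h)) (at s)"
    by (auto intro!: derivative_eq_intros)
  have d2: "(f has_derivative (\<lambda>k. k \<bullet> G (x + s *\<^sub>R h))) (at (x + s *\<^sub>R h))"
    using grad[of "x + s *\<^sub>R h"] by (simp add: gderiv_def)
  have "((\<lambda>s. f (x + s *\<^sub>R h)) has_derivative (\<lambda>t. (G (x + s *\<^sub>R h) \<bullet> h) * t)) (at s)"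
    using has_derivative_compose[OF d1 d2] by (simp add: o_def inner_commute mult.commute)
  then show ?thesis
    unfolding has_field_derivative_def by simp
qed

lemma tangent_ineq:
  fixes f :: "'d::euclidean_space \<Rightarrow> real"
  assumes cvx: "convex_on UNIV f" and grad: "\<And>z. GDERIV f z :> G z"
  shows "f x + G x \<bullet> (y - x) \<le> f y"
proof -
  define h where "h = y - x"
  define phi where "phi = (\<lambda>s::real. f (x + s *\<^sub>R h))"
  have cphi: "convex_on UNIV phi"
  proof (rule convex_onI)
    show "convex (UNIV::real set)" by simp
  next
    fix t a b :: real assume t: "0 < t" "t < 1"
    have "x + ((1 - t) * a + t * b) *\<^sub>R h = (1 - t) *\<^sub>R (x + a *\<^sub>R h) + t *\<^sub>R (x + b *\<^sub>R h)"
      by (simp add: algebra_simps scaleR_add_left)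
    then show "phi ((1 - t) *\<^sub>R a + t *\<^sub>R b) \<le> (1 - t) * phi a + t * phi b"
      unfolding phi_def using convex_onD[OF cvx, of t "x + a *\<^sub>R h" "x + b *\<^sub>R h"] t
      by simp
  qed
  have d: "(phi has_real_derivative (G x \<bullet> h)) (at 0 within UNIV)"
    using line_deriv[OF grad, of x h 0] unfolding phi_def by simp
  have "phi 1 - phi 0 \<ge> (G x \<bullet> h) * (1 - 0)"
    by (rule convex_on_imp_above_tangent[OF cphi]) (use d in auto)
  then show ?thesis unfolding phi_def h_def by simp
qed

lemma descent_ineq:
  fixes f :: "'d::euclidean_space \<Rightarrow> real"
  assumes grad: "\<And>z. GDERIV f z :> G z" and lip: "L-lipschitz_on UNIV G"
  shows "f y \<le> f x + G x \<bullet> (y - x) + L / 2 * (norm (y - x))\<^sup>2"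
proof -
  define h where "h = y - x"
  define psi where "psi = (\<lambda>s::real. f (x + s *\<^sub>R h) - s * (G x \<bullet> h) - L / 2 * s^2 * (norm h)\<^sup>2)"
  have D: "\<And>s. (psi has_real_derivative (G (x + s *\<^sub>R h) \<bullet> h - G x \<bullet> h - L * s * (norm h)\<^sup>2)) (at s)"
    unfolding psi_def
    by (auto intro!: derivative_eq_intros line_deriv[OF grad] simp: field_simps)
  obtain z where z: "0 < z" "z < 1" "psi 1 - psi 0 = (1 - 0) * (G (x + z *\<^sub>R h) \<bullet> h - G x \<bullet> h - L * z * (norm h)\<^sup>2)"
    using MVT2[of 0 1 psi "\<lambda>s. G (x + s *\<^sub>R h) \<bullet> h - G x \<bullet> h - L * s * (norm h)\<^sup>2"] D by auto
  have "G (x + z *\<^sub>R h) \<bullet> h - G x \<bullet> h = (G (x + z *\<^sub>R h) - G x) \<bullet> h" by (simp add: inner_diff_left)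
  also have "\<dots> \<le> norm (G (x + z *\<^sub>R h) - G x) * norm h" by (rule norm_cauchy_schwarz)
  also have "norm (G (x + z *\<^sub>R h) - G x) \<le> L * norm (z *\<^sub>R h)"
    using lip unfolding lipschitz_on_def by (metis UNIV_I dist_norm add_diff_cancel_left')
  hence "norm (G (x + z *\<^sub>R h) - G x) * norm h \<le> L * norm (z *\<^sub>R h) * norm h"
    by (simp add: mult_right_mono)
  also have "\<dots> = L * z * (norm h)\<^sup>2" using z by (simp add: power2_eq_square)
  finally have "psi 1 \<le> psi 0" using z by simp
  then show ?thesis unfolding psi_def h_def by simp
qed

lemma proj_ineq:
  fixes G v :: "'d::euclidean_space" and p :: "nat \<Rightarrow> 'd"
  assumes "norm v = 1" "\<And>i. i \<in> {1..s} \<Longrightarrow> norm (p i) = 1"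
    "\<And>i. i \<in> {1..s} \<Longrightarrow> v \<bullet> p i = 0"
    "\<And>i j. i \<in> {1..s} \<Longrightarrow> j \<in> {1..s} \<Longrightarrow> i \<noteq> j \<Longrightarrow> p i \<bullet> p j = 0"
    "g = (G \<bullet> v) *\<^sub>R v + (\<Sum>i=1..s. (G \<bullet> p i) *\<^sub>R p i)"
  shows "G \<bullet> g = (norm g)\<^sup>2"
proof -
  have vv: "v \<bullet> v = 1" using assms(1) by (simp add: norm_eq_1)
  have pp: "\<And>i. i \<in> {1..s} \<Longrightarrow> p i \<bullet> p i = 1" using assms(2) by (simp add: norm_eq_1)
  have gv: "v \<bullet> g = G \<bullet> v"
    using assms(3) vv by (simp add: assms(5) inner_add_right inner_sum_right)
  have gp: "p j \<bullet> g = G \<bullet> p j" if j: "j \<in> {1..s}" for j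
  proof -
    have "(\<Sum>i=1..s. (G \<bullet> p i) * (p j \<bullet> p i)) = (\<Sum>i\<in>{j}. (G \<bullet> p i) * (p j \<bullet> p i))"
      by (rule sum.mono_neutral_right) (use j assms(4) in auto)
    then show ?thesis using j pp assms(3)[OF j]
      by (simp add: assms(5) inner_add_right inner_sum_right inner_commute)
  qed
  have "(norm g)\<^sup>2 = g \<bullet> g" by (simp add: power2_norm_eq_inner)
  also have "\<dots> = (G \<bullet> v) * (v \<bullet> g) + (\<Sum>i=1..s. (G \<bullet> p i) * (p i \<bullet> g))"
    by (subst (1) assms(5)) (simp add: inner_add_left inner_sum_left)
  also have "\<dots> = (G \<bullet> v) * (G \<bullet> v) + (\<Sum>i=1..s. (G \<bullet> p i) * (G \<bullet> p i))"
    using gv gp by simp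
  also have "\<dots> = G \<bullet> g"
    by (simp add: assms(5) inner_add_right inner_sum_right)
  finally show ?thesis by simp
qed

lemma step_pointwise:
  fixes f :: "'d::euclidean_space \<Rightarrow> real"
  assumes cvx: "convex_on UNIV f" and grad: "\<And>z. GDERIV f z :> G z"
    and lip: "L-lipschitz_on UNIV G"
    and al: "0 < al" "al < 1" and ga: "0 < ga" and aleq: "al\<^sup>2 = ze * ga * (1 - al)"
    and tt: "tt = (1 - al) *\<^sub>R th + al *\<^sub>R m"
    and th': "th' = tt - (1 / Lh) *\<^sub>R g1"
    and proj: "G tt \<bullet> g1 = (norm g1)\<^sup>2"
    and LL: "L \<le> Lh" "0 < Lh"
    and m': "m' = m - (ze / al) *\<^sub>R g2"
  shows "f th' - f ts + (1 - al) * ga / 2 * (norm (m' - ts))\<^sup>2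
    \<le> (1 - al) * (f th - f ts + ga / 2 * (norm (m - ts))\<^sup>2)
       + al * ((G tt - g2) \<bullet> (m - ts)) + ze / 2 * (norm g2)\<^sup>2 - 1 / (2 * Lh) * (norm g1)\<^sup>2"
proof -
  have L0: "0 \<le> L" using lip by (simp add: lipschitz_on_def)
  have a1: "f th' \<le> f tt + G tt \<bullet> (th' - tt) + L / 2 * (norm (th' - tt))\<^sup>2"
    by (rule descent_ineq[OF grad lip])
  have "G tt \<bullet> (th' - tt) = - (1 / Lh) * (norm g1)\<^sup>2" using proj by (simp add: th')
  moreover have "(norm (th' - tt))\<^sup>2 = (1 / Lh)\<^sup>2 * (norm g1)\<^sup>2" using LL
    by (simp add: th' power_divide)
  ultimately have a2: "f th' \<le> f tt - (1 / Lh) * (norm g1)\<^sup>2 + L / 2 * ((1 / Lh)\<^sup>2 * (norm g1)\<^sup>2)"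
    using a1 by simp
  have "L / 2 * ((1 / Lh)\<^sup>2 * (norm g1)\<^sup>2) \<le> Lh / 2 * ((1 / Lh)\<^sup>2 * (norm g1)\<^sup>2)"
    using LL by (intro mult_right_mono) auto
  also have "\<dots> = 1 / (2 * Lh) * (norm g1)\<^sup>2" using LL by (simp add: power2_eq_square field_simps)
  finally have a3: "L / 2 * ((1 / Lh)\<^sup>2 * (norm g1)\<^sup>2) \<le> 1 / (2 * Lh) * (norm g1)\<^sup>2" .
  have a4: "(1 / Lh) * (norm g1)\<^sup>2 = 2 * (1 / (2 * Lh) * (norm g1)\<^sup>2)" by simp
  have A: "f th' \<le> f tt - 1 / (2 * Lh) * (norm g1)\<^sup>2" using a2 a3 a4 by linarith
  have b1: "f tt + G tt \<bullet> (th - tt) \<le> f th" by (rule tangent_ineq[OF cvx grad])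
  have b2: "f tt + G tt \<bullet> (ts - tt) \<le> f ts" by (rule tangent_ineq[OF cvx grad])
  have "(1 - al) *\<^sub>R (th - tt) + al *\<^sub>R (ts - tt) = - (al *\<^sub>R (m - ts))"
    by (simp add: tt algebra_simps)
  hence "(1 - al) * (G tt \<bullet> (th - tt)) + al * (G tt \<bullet> (ts - tt)) = - al * (G tt \<bullet> (m - ts))"
    by (metis inner_add_right inner_minus_right inner_scaleR_right mult_minus_left)
  hence B: "f tt - f ts \<le> (1 - al) * (f th - f ts) + al * (G tt \<bullet> (m - ts))"
    using mult_left_mono[OF b1, of "1 - al"] mult_left_mono[OF b2, of al] al
    by (simp add: algebra_simps)
  define c where "c = ze / al"
  have mm: "m' - ts = (m - ts) - c *\<^sub>R g2" by (simp add: m' c_def)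
  have C1: "(norm (m' - ts))\<^sup>2 = (norm (m - ts))\<^sup>2 - 2 * c * (g2 \<bullet> (m - ts)) + c\<^sup>2 * (norm g2)\<^sup>2"
    unfolding mm power2_norm_eq_inner
    by (simp add: inner_diff_left inner_diff_right inner_commute power2_eq_square algebra_simps)
  have k1: "(1 - al) * ga * c = al" using aleq al by (simp add: c_def power2_eq_square field_simps)
  have k2: "(1 - al) * ga / 2 * c\<^sup>2 = ze / 2"
  proof -
    have "(1 - al) * ga / 2 * c\<^sup>2 = ((1 - al) * ga * c) * c / 2" by (simp add: power2_eq_square)
    also have "\<dots> = ze / 2" using k1 al by (simp add: c_def)
    finally show ?thesis .
  qed
  have C: "(1 - al) * ga / 2 * (norm (m' - ts))\<^sup>2 = (1 - al) * (ga / 2 * (norm (m - ts))\<^sup>2)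
       - al * (g2 \<bullet> (m - ts)) + ze / 2 * (norm g2)\<^sup>2"
  proof -
    have "(1 - al) * ga / 2 * (norm (m' - ts))\<^sup>2 = (1 - al) * (ga / 2 * (norm (m - ts))\<^sup>2)
       - ((1 - al) * ga * c) * (g2 \<bullet> (m - ts)) + ((1 - al) * ga / 2 * c\<^sup>2) * (norm g2)\<^sup>2"
    proof -
      have gen: "\<And>N X Y::real. (1 - al) * ga / 2 * (N - 2 * c * X + c\<^sup>2 * Y)
         = (1 - al) * (ga / 2 * N) - ((1 - al) * ga * c) * X + ((1 - al) * ga / 2 * c\<^sup>2) * Y"
        by (simp add: field_simps)
      show ?thesis unfolding C1 by (rule gen)
    qed
    then show ?thesis using k1 k2 by simp
  qed
  have D: "(G tt - g2) \<bullet> (m - ts) = G tt \<bullet> (m - ts) - g2 \<bullet> (m - ts)" by (simp add: inner_diff_left)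
  have E: "(1 - al) * (f th - f ts + ga / 2 * (norm (m - ts))\<^sup>2) = (1 - al) * (f th - f ts) + (1 - al) * (ga / 2 * (norm (m - ts))\<^sup>2)"
    by (simp add: distrib_left)
  have F: "al * (G tt \<bullet> (m - ts) - g2 \<bullet> (m - ts)) = al * (G tt \<bullet> (m - ts)) - al * (g2 \<bullet> (m - ts))"
    by (simp add: right_diff_distrib)
  show ?thesis unfolding D E F using A B C by linarith
qed

lemma sqrt_step:
  fixes a b al ze :: real
  assumes "0 < ga" "0 < al" "al < 1" "al\<^sup>2 = ze * ((1 - al) * ga)" "0 < ze"
  shows "1 / sqrt ga + sqrt ze / 2 \<le> 1 / sqrt ((1 - al) * ga)"
proof -
  define a where "a = sqrt ga"
  define b where "b = sqrt ((1 - al) * ga)"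
  have ga1: "0 < (1 - al) * ga" using assms(1,3) by simp
  have a: "0 < a" using assms(1) by (simp add: a_def)
  have b: "0 < b" using ga1 by (simp add: b_def)
  have a2: "a\<^sup>2 = ga" using assms(1) by (simp add: a_def)
  have b2: "b\<^sup>2 = (1 - al) * ga" using ga1 by (simp add: b_def)
  have "(1 - al) * ga < 1 * ga" using assms(1,2) by (intro mult_strict_right_mono) auto
  hence "b\<^sup>2 < a\<^sup>2" unfolding a2 b2 by simp
  hence ba: "b < a" using a power2_less_imp_less by fastforce
  have sz: "sqrt ze = al / b"
  proof -
    have "(al / b)\<^sup>2 = al\<^sup>2 / b\<^sup>2" by (rule power_divide)
    also have "\<dots> = ze * b\<^sup>2 / b\<^sup>2" using assms(4) unfolding b2 by simp
    also have "\<dots> = ze" using b by simp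
    finally have "ze = (al / b)\<^sup>2" by simp
    then show ?thesis using assms(2) b by simp
  qed
  have e: "(a - b) * (a + b) = al * a\<^sup>2" using a2 b2 by (simp add: algebra_simps power2_eq_square)
  have "(a - b) * (a + b) \<le> (a - b) * (2 * a)"
    using ba by (intro mult_left_mono) auto
  hence "(a - b) * (2 * a) \<ge> al * a\<^sup>2" using e by simp
  moreover have "al * a\<^sup>2 = a * (al * a)" by (simp add: power2_eq_square)
  moreover have "(a - b) * (2 * a) = a * (2 * (a - b))" by simp
  ultimately have "a * (al * a) \<le> a * (2 * (a - b))" by simp
  hence "2 * (a - b) \<ge> al * a" using a by (simp add: mult_le_cancel_left_pos)
  hence "b * (al * a + b * 2) \<le> b * (a * 2)" using b by (intro mult_left_mono) auto
  hence H: "a * (al * b) + b * (b * 2) \<le> a * (b * 2)" by (simp add: algebra_simps)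
  have "1 / a + al / b / 2 \<le> 1 / b" using H a b by (simp add: field_simps)
  then show ?thesis unfolding sz a_def b_def .
qed


lemma int_bdd_mult:
  fixes g h :: "'a \<Rightarrow> real"
  assumes g: "integrable M g" and h: "h \<in> borel_measurable M"
    and b: "\<And>w. w \<in> space M \<Longrightarrow> \<bar>h w\<bar> \<le> K"
  shows "integrable M (\<lambda>w. h w * g w)"
proof (rule Bochner_Integration.integrable_bound[OF integrable_mult_right[OF g, of K]])
  show "(\<lambda>w. h w * g w) \<in> borel_measurable M" using h g by measurable
  show "AE x in M. norm (h x * g x) \<le> norm (K * g x)"
  proof (rule AE_I2)
    fix x assume x: "x \<in> space M"
    have "K \<ge> 0" using b[OF x] by linarith
    hence "\<bar>h x\<bar> * \<bar>g x\<bar> \<le> K * \<bar>g x\<bar>" using b[OF x] by (intro mult_right_mono) auto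
    then show "norm (h x * g x) \<le> norm (K * g x)" using \<open>K \<ge> 0\<close> by (simp add: abs_mult)
  qed
qed

lemma le_one_plus_sq: "(x::real) \<le> 1 + x\<^sup>2"
proof (cases "x \<le> 1")
  case True then show ?thesis by (smt (verit) zero_le_power2)
next
  case False
  then have "x \<le> x * x" by (intro mult_le_cancel_left1[THEN iffD2]) auto
  then show ?thesis by (simp add: power2_eq_square)
qed


theorem theorem2:
  fixes M :: "'w measure" and F :: "nat \<Rightarrow> 'w measure"
    and f :: "'d::euclidean_space \<Rightarrow> real" and gradf :: "'d \<Rightarrow> 'd"
    and L Lhat gamma0 :: real and thetastar theta0 :: 'd
    and s T :: nat
    and zeta alpha gamma :: "nat \<Rightarrow> 'w \<Rightarrow> real"
    and theta m thetat g1 g2 v :: "nat \<Rightarrow> 'w \<Rightarrow> 'd"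
    and p :: "nat \<Rightarrow> nat \<Rightarrow> 'w \<Rightarrow> 'd"
  assumes M: "prob_space M"
    and filt: "filtration (space M) F"
    and sub: "\<And>t. subalgebra M (F t)"
    (* f convex and L-smooth with minimizer thetastar *)
    and convex: "convex_on UNIV f"
    and grad: "\<And>x. GDERIV f x :> gradf x"
    and smooth: "L-lipschitz_on UNIV gradf"
    and minimizer: "\<And>x. f thetastar \<le> f x"
    and Lhat: "Lhat \<ge> L"
    and gamma0: "gamma0 > 0"
    (* initialisation *)
    and init_theta: "\<And>w. w \<in> space M \<Longrightarrow> theta 0 w = theta0"
    and init_m: "\<And>w. w \<in> space M \<Longrightarrow> m 0 w = theta0"
    and init_gamma: "\<And>w. w \<in> space M \<Longrightarrow> gamma 0 w = gamma0"
    (* (i) step-size parameter *)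
    and zeta_pos: "\<And>t w. t < T \<Longrightarrow> w \<in> space M \<Longrightarrow> zeta t w > 0"
    and zeta_meas: "\<And>t. t < T \<Longrightarrow> zeta t \<in> borel_measurable (F t)"
    (* (ii) *)
    and alpha_range: "\<And>t w. t < T \<Longrightarrow> w \<in> space M \<Longrightarrow> 0 < alpha t w \<and> alpha t w < 1"
    and alpha_eq: "\<And>t w. t < T \<Longrightarrow> w \<in> space M \<Longrightarrow>
        (alpha t w)\<^sup>2 = zeta t w * gamma t w * (1 - alpha t w)"
    and thetat_def: "\<And>t w. t < T \<Longrightarrow> w \<in> space M \<Longrightarrow>
        thetat t w = (1 - alpha t w) *\<^sub>R theta t w + alpha t w *\<^sub>R m t w"
    and gamma_next: "\<And>t w. t < T \<Longrightarrow> w \<in> space M \<Longrightarrow>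
        gamma (Suc t) w = (1 - alpha t w) * gamma t w"
    (* (iii) random orthonormal family and gradient estimators *)
    and v_meas: "\<And>t. t < T \<Longrightarrow> v t \<in> borel_measurable (F (Suc t))"
    and p_meas: "\<And>t i. t < T \<Longrightarrow> i \<in> {1..s} \<Longrightarrow> p t i \<in> borel_measurable (F (Suc t))"
    and g2_meas: "\<And>t. t < T \<Longrightarrow> g2 t \<in> borel_measurable (F (Suc t))"
    and v_unit: "\<And>t w. t < T \<Longrightarrow> w \<in> space M \<Longrightarrow> norm (v t w) = 1"
    and p_unit: "\<And>t i w. t < T \<Longrightarrow> i \<in> {1..s} \<Longrightarrow> w \<in> space M \<Longrightarrow> norm (p t i w) = 1"
    and vp_orth: "\<And>t i w. t < T \<Longrightarrow> i \<in> {1..s} \<Longrightarrow> w \<in> space M \<Longrightarrow> v t w \<bullet> p t i w = 0"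
    and pp_orth: "\<And>t i j w. t < T \<Longrightarrow> i \<in> {1..s} \<Longrightarrow> j \<in> {1..s} \<Longrightarrow> i \<noteq> j \<Longrightarrow>
        w \<in> space M \<Longrightarrow> p t i w \<bullet> p t j w = 0"
    and g1_def: "\<And>t w. t < T \<Longrightarrow> w \<in> space M \<Longrightarrow>
        g1 t w = (gradf (thetat t w) \<bullet> v t w) *\<^sub>R v t w
               + (\<Sum>i=1..s. (gradf (thetat t w) \<bullet> p t i w) *\<^sub>R p t i w)"
    and g1_sq_int: "\<And>t. t < T \<Longrightarrow> integrable M (\<lambda>w. (norm (g1 t w))\<^sup>2)"
    and g2_sq_int: "\<And>t. t < T \<Longrightarrow> integrable M (\<lambda>w. (norm (g2 t w))\<^sup>2)"
    and g2_unbiased: "\<And>t b. t < T \<Longrightarrow> b \<in> Basis \<Longrightarrow>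
        AE w in M. real_cond_exp M (F t) (\<lambda>w. g2 t w \<bullet> b) w = gradf (thetat t w) \<bullet> b"
    (* (iv) step-size condition *)
    and zeta_le: "\<And>t. t < T \<Longrightarrow>
        AE w in M. zeta t w \<le> real_cond_exp M (F t) (\<lambda>w. (norm (g1 t w))\<^sup>2) w
                      / (Lhat * real_cond_exp M (F t) (\<lambda>w. (norm (g2 t w))\<^sup>2) w)"
    (* (v) updates *)
    and theta_next: "\<And>t w. t < T \<Longrightarrow> w \<in> space M \<Longrightarrow>
        theta (Suc t) w = thetat t w - (1 / Lhat) *\<^sub>R g1 t w"
    and m_next: "\<And>t w. t < T \<Longrightarrow> w \<in> space M \<Longrightarrow>
        m (Suc t) w = m t w - (zeta t w / alpha t w) *\<^sub>R g2 t w"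
  shows "(\<integral>\<^sup>+ w. ennreal ((f (theta T w) - f thetastar)
            * (1 + sqrt gamma0 / 2 * (\<Sum>t<T. sqrt (zeta t w)))\<^sup>2) \<partial>M)
         \<le> ennreal (f theta0 - f thetastar + gamma0 / 2 * (norm (theta0 - thetastar))\<^sup>2)"
proof -
  interpret P: prob_space M by (rule M)
  have spF: "\<And>t. space (F t) = space M" using sub by (simp add: subalgebra_def)
  have subS: "\<And>t. subalgebra (F (Suc t)) (F t)"
    using filtration.sets_F_mono[OF filt, of t "Suc t" for t] spF
    unfolding subalgebra_def by auto
  have FS: "\<And>t g N. g \<in> measurable (F t) N \<Longrightarrow> g \<in> measurable (F (Suc t)) N"
    by (rule measurable_from_subalg[OF subS])
  have FM: "\<And>t g N. g \<in> measurable (F t) N \<Longrightarrow> g \<in> measurable M N"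
    by (rule measurable_from_subalg[OF sub])
  have Fcong: "g \<in> measurable (F t) N"
    if "\<And>w. w \<in> space M \<Longrightarrow> g w = h w" "h \<in> measurable (F t) N" for t g h N
    using measurable_cong[of "F t" g h N] spF that by metis
  have L0: "0 \<le> L" using smooth by (simp add: lipschitz_on_def)
  have gradf_cont: "continuous_on UNIV gradf" by (rule lipschitz_on_continuous_on[OF smooth])
  have gradf_meas[measurable]: "gradf \<in> borel_measurable borel"
    by (rule borel_measurable_continuous_onI[OF gradf_cont])
  have f_cont: "continuous_on UNIV f"
  proof (rule continuous_at_imp_continuous_on, intro ballI)
    fix x :: 'd
    show "isCont f x" using grad[of x] unfolding gderiv_def
      by (rule has_derivative_continuous)
  qed
  have f_meas[measurable]: "f \<in> borel_measurable borel"
    by (rule borel_measurable_continuous_onI[OF f_cont])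
  have gpos_lt: "\<And>t w. t < T \<Longrightarrow> w \<in> space M \<Longrightarrow> gamma t w > 0"
  proof -
    fix t w assume t: "t < T" and w: "w \<in> space M"
    have a: "0 < alpha t w" "alpha t w < 1" using alpha_range[OF t w] by auto
    have z: "zeta t w > 0" using zeta_pos[OF t w] .
    have e: "(alpha t w)\<^sup>2 = (zeta t w * (1 - alpha t w)) * gamma t w" using alpha_eq[OF t w] by (simp add: algebra_simps)
    have "(alpha t w)\<^sup>2 > 0" using a by simp
    hence "(zeta t w * (1 - alpha t w)) * gamma t w > 0" using e by simp
    moreover have "zeta t w * (1 - alpha t w) > 0" using a z by simp
    ultimately show "gamma t w > 0" by (simp add: zero_less_mult_iff)
  qed
  have gpos: "\<And>t w. t \<le> T \<Longrightarrow> w \<in> space M \<Longrightarrow> gamma t w > 0"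
  proof -
    fix t w assume t: "t \<le> T" and w: "w \<in> space M"
    show "gamma t w > 0"
    proof (cases "t < T")
      case True then show ?thesis using gpos_lt w by blast
    next
      case False
      then have tT: "t = T" using t by simp
      show ?thesis
      proof (cases T)
        case 0 then show ?thesis using tT init_gamma[OF w] gamma0 by simp
      next
        case (Suc k)
        have k: "k < T" using Suc by simp
        have "gamma T w = (1 - alpha k w) * gamma k w" using gamma_next[OF k w] Suc by simp
        moreover have "1 - alpha k w > 0" using alpha_range[OF k w] by simp
        ultimately show ?thesis using tT gpos_lt[OF k w] by simp
      qed
    qed
  qed
  have alpha_form: "\<And>t w. t < T \<Longrightarrow> w \<in> space M \<Longrightarrow>
      alpha t w = (sqrt ((zeta t w * gamma t w)\<^sup>2 + 4 * (zeta t w * gamma t w)) - zeta t w * gamma t w) / 2"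
  proof -
    fix t w assume t: "t < T" and w: "w \<in> space M"
    define c where "c = zeta t w * gamma t w"
    define a where "a = alpha t w"
    have c: "0 < c" using zeta_pos[OF t w] gpos_lt[OF t w] by (simp add: c_def)
    have a: "0 < a" using alpha_range[OF t w] by (simp add: a_def)
    have e: "a\<^sup>2 = c * (1 - a)" using alpha_eq[OF t w] by (simp add: a_def c_def)
    have "(2 * a + c)\<^sup>2 = c\<^sup>2 + 4 * c"
    proof -
      have "(2 * a + c)\<^sup>2 = 4 * a\<^sup>2 + 4 * a * c + c\<^sup>2" by (simp add: power2_eq_square algebra_simps)
      also have "\<dots> = c\<^sup>2 + 4 * c" unfolding e by (simp add: algebra_simps)
      finally show ?thesis .
    qed
    hence "sqrt (c\<^sup>2 + 4 * c) = 2 * a + c" using a c by (intro real_sqrt_unique) auto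
    then show "alpha t w = (sqrt ((zeta t w * gamma t w)\<^sup>2 + 4 * (zeta t w * gamma t w)) - zeta t w * gamma t w) / 2"
      by (simp add: a_def c_def)
  qed
  have meas: "theta t \<in> borel_measurable (F t) \<and> m t \<in> borel_measurable (F t) \<and> gamma t \<in> borel_measurable (F t)"
    if "t \<le> T" for t
    using that
  proof (induction t)
    case 0
    have "theta 0 \<in> borel_measurable (F 0)" by (rule Fcong[of "theta 0" "\<lambda>_. theta0"]) (auto simp: init_theta)
    moreover have "m 0 \<in> borel_measurable (F 0)" by (rule Fcong[of "m 0" "\<lambda>_. theta0"]) (auto simp: init_m)
    moreover have "gamma 0 \<in> borel_measurable (F 0)" by (rule Fcong[of "gamma 0" "\<lambda>_. gamma0"]) (auto simp: init_gamma)
    ultimately show ?case by blast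
  next
    case (Suc t)
    hence t: "t < T" by simp
    have [measurable]: "theta t \<in> borel_measurable (F t)" "m t \<in> borel_measurable (F t)" "gamma t \<in> borel_measurable (F t)"
      using Suc by auto
    note [measurable] = zeta_meas[OF t]
    have am[measurable]: "alpha t \<in> borel_measurable (F t)"
      by (rule Fcong[OF alpha_form[OF t]]) measurable
    have tm[measurable]: "thetat t \<in> borel_measurable (F t)"
      by (rule Fcong[OF thetat_def[OF t]]) measurable
    note [measurable] = FS[OF am] FS[OF tm] FS[OF zeta_meas[OF t]] v_meas[OF t] g2_meas[OF t]
      FS[of "theta t"] FS[of "m t"] FS[of "gamma t"]
    have pm[measurable]: "\<And>i. i \<in> {1..s} \<Longrightarrow> p t i \<in> borel_measurable (F (Suc t))"
      using p_meas[OF t] by blast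
    have g1m[measurable]: "g1 t \<in> borel_measurable (F (Suc t))"
      by (rule Fcong[OF g1_def[OF t]]) measurable
    have "theta (Suc t) \<in> borel_measurable (F (Suc t))"
      by (rule Fcong[OF theta_next[OF t]]) measurable
    moreover have "m (Suc t) \<in> borel_measurable (F (Suc t))"
      by (rule Fcong[OF m_next[OF t]]) measurable
    moreover have "gamma (Suc t) \<in> borel_measurable (F (Suc t))"
      by (rule Fcong[OF gamma_next[OF t]]) measurable
    ultimately show ?case by blast
  qed
  have mT: "\<And>t. t < T \<Longrightarrow> theta t \<in> borel_measurable (F t) \<and> m t \<in> borel_measurable (F t) \<and> gamma t \<in> borel_measurable (F t)"
    using meas by simp
  have sqb: "\<And>t w. t \<le> T \<Longrightarrow> w \<in> space M \<Longrightarrow>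
      1 / sqrt gamma0 + (\<Sum>k<t. sqrt (zeta k w)) / 2 \<le> 1 / sqrt (gamma t w)"
  proof -
    fix t w assume t: "t \<le> T" and w: "w \<in> space M"
    show "1 / sqrt gamma0 + (\<Sum>k<t. sqrt (zeta k w)) / 2 \<le> 1 / sqrt (gamma t w)"
      using t
    proof (induction t)
      case 0 then show ?case using init_gamma[OF w] by simp
    next
      case (Suc t)
      hence t: "t < T" by simp
      have "1 / sqrt gamma0 + (\<Sum>k<Suc t. sqrt (zeta k w)) / 2
          = (1 / sqrt gamma0 + (\<Sum>k<t. sqrt (zeta k w)) / 2) + sqrt (zeta t w) / 2"
        by (simp add: add_divide_distrib)
      also have "\<dots> \<le> 1 / sqrt (gamma t w) + sqrt (zeta t w) / 2" using Suc by simp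
      also have "\<dots> \<le> 1 / sqrt ((1 - alpha t w) * gamma t w)"
        apply (rule sqrt_step)
        using gpos_lt[OF t w] alpha_range[OF t w] zeta_pos[OF t w] alpha_eq[OF t w]
        by (auto simp: algebra_simps)
      also have "\<dots> = 1 / sqrt (gamma (Suc t) w)" using gamma_next[OF t w] by simp
      finally show ?case .
    qed
  qed
  define Phi where "Phi t w = f (theta t w) - f thetastar + gamma t w / 2 * (norm (m t w - thetastar))\<^sup>2" for t w
  define W where "W t w = gamma0 / gamma t w" for t w
  define C where "C = f theta0 - f thetastar + gamma0 / 2 * (norm (theta0 - thetastar))\<^sup>2"
  have Phi_nn: "\<And>t w. t \<le> T \<Longrightarrow> w \<in> space M \<Longrightarrow> Phi t w \<ge> f (theta t w) - f thetastar"
    unfolding Phi_def using gpos by (simp add: order.strict_implies_order)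
  have step: "(\<integral>\<^sup>+ w. ennreal (W (Suc t) w * Phi (Suc t) w) \<partial>M) \<le> (\<integral>\<^sup>+ w. ennreal (W t w * Phi t w) \<partial>M)"
    if t: "t < T" for t
  proof -
    have tT: "t \<le> T" "Suc t \<le> T" using t by auto
    have mt[measurable]: "theta t \<in> borel_measurable (F t)" "m t \<in> borel_measurable (F t)" "gamma t \<in> borel_measurable (F t)"
      using meas[OF tT(1)] by auto
    have ms[measurable]: "theta (Suc t) \<in> borel_measurable (F (Suc t))" "m (Suc t) \<in> borel_measurable (F (Suc t))"
      "gamma (Suc t) \<in> borel_measurable (F (Suc t))"
      using meas[OF tT(2)] by auto
    note [measurable] = zeta_meas[OF t]
    have am[measurable]: "alpha t \<in> borel_measurable (F t)"
      by (rule Fcong[OF alpha_form[OF t]]) measurable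
    have tm[measurable]: "thetat t \<in> borel_measurable (F t)"
      by (rule Fcong[OF thetat_def[OF t]]) measurable
    note [measurable] = FS[OF am] FS[OF tm] FS[OF zeta_meas[OF t]] v_meas[OF t] g2_meas[OF t]
      FS[OF mt(1)] FS[OF mt(2)] FS[OF mt(3)]
    have pm[measurable]: "\<And>i. i \<in> {1..s} \<Longrightarrow> p t i \<in> borel_measurable (F (Suc t))"
      using p_meas[OF t] by blast
    have g1m[measurable]: "g1 t \<in> borel_measurable (F (Suc t))"
      by (rule Fcong[OF g1_def[OF t]]) measurable
    note [measurable] = FM[OF mt(1)] FM[OF mt(2)] FM[OF mt(3)] FM[OF ms(1)] FM[OF ms(2)] FM[OF ms(3)]
      FM[OF am] FM[OF tm] FM[OF zeta_meas[OF t]] FM[OF g1m] FM[OF g2_meas[OF t]]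
    interpret S: finite_measure_subalgebra M "F t"
      by (rule finite_measure_subalgebra.intro[OF P.finite_measure_axioms])
        (simp add: finite_measure_subalgebra_axioms_def sub)
    have Lh: "0 < Lhat"
    proof (rule ccontr)
      assume "\<not> 0 < Lhat" hence "Lhat = 0" using Lhat L0 by simp
      hence "AE w in M. zeta t w \<le> 0" using zeta_le[OF t] by simp
      moreover have "AE w in M. zeta t w > 0" using zeta_pos[OF t] by (intro AE_I2) simp
      ultimately have "AE w in M. False" by eventually_elim auto
      thus False using P.AE_False by simp
    qed
    define Wp where "Wp w = gamma0 / ((1 - alpha t w) * gamma t w)" for w
    define Z where "Z w = W (Suc t) w * Phi (Suc t) w" for w
    define Y where "Y w = W t w * Phi t w" for w
    have Wpm[measurable]: "Wp \<in> borel_measurable (F t)" unfolding Wp_def by measurable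
    note [measurable] = FM[OF Wpm]
    have Zm[measurable]: "Z \<in> borel_measurable M" unfolding Z_def W_def Phi_def by measurable
    have Ym[measurable]: "Y \<in> borel_measurable M" unfolding Y_def W_def Phi_def by measurable
    have Wp_pos: "\<And>w. w \<in> space M \<Longrightarrow> Wp w > 0"
      unfolding Wp_def using gamma0 gpos_lt[OF t] alpha_range[OF t] by simp
    have Z_nn: "\<And>w. w \<in> space M \<Longrightarrow> Z w \<ge> 0"
      unfolding Z_def W_def using Phi_nn[OF tT(2)] minimizer gpos[OF tT(2)] gamma0
      by (smt (verit, best) divide_pos_pos mult_nonneg_nonneg)
    have Y_nn: "\<And>w. w \<in> space M \<Longrightarrow> Y w \<ge> 0"
      unfolding Y_def W_def using Phi_nn[OF tT(1)] minimizer gpos[OF tT(1)] gamma0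
      by (smt (verit, best) divide_pos_pos mult_nonneg_nonneg)
    have key: "Z w \<le> Y w + Wp w * (alpha t w * ((gradf (thetat t w) - g2 t w) \<bullet> (m t w - thetastar)))
        + (Wp w * zeta t w / 2) * (norm (g2 t w))\<^sup>2 - (Wp w / (2 * Lhat)) * (norm (g1 t w))\<^sup>2"
      if w: "w \<in> space M" for w
    proof -
      have a: "0 < alpha t w" "alpha t w < 1" using alpha_range[OF t w] by auto
      have g: "0 < gamma t w" using gpos_lt[OF t w] .
      have proj: "gradf (thetat t w) \<bullet> g1 t w = (norm (g1 t w))\<^sup>2"
        by (rule proj_ineq[where v="v t w" and p="\<lambda>i. p t i w" and s=s])
           (use v_unit[OF t w] p_unit[OF t _ w] vp_orth[OF t _ w] pp_orth[OF t _ _ _ w] g1_def[OF t w] in auto)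
      have sp: "f (theta (Suc t) w) - f thetastar + (1 - alpha t w) * gamma t w / 2 * (norm (m (Suc t) w - thetastar))\<^sup>2
        \<le> (1 - alpha t w) * (f (theta t w) - f thetastar + gamma t w / 2 * (norm (m t w - thetastar))\<^sup>2)
           + alpha t w * ((gradf (thetat t w) - g2 t w) \<bullet> (m t w - thetastar)) + zeta t w / 2 * (norm (g2 t w))\<^sup>2
           - 1 / (2 * Lhat) * (norm (g1 t w))\<^sup>2"
        by (rule step_pointwise[OF convex grad smooth a g alpha_eq[OF t w] thetat_def[OF t w] theta_next[OF t w] proj Lhat Lh m_next[OF t w]])
      have P1: "Phi (Suc t) w = f (theta (Suc t) w) - f thetastar + (1 - alpha t w) * gamma t w / 2 * (norm (m (Suc t) w - thetastar))\<^sup>2"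
        unfolding Phi_def using gamma_next[OF t w] by simp
      have W1: "W (Suc t) w = Wp w" unfolding W_def Wp_def using gamma_next[OF t w] by simp
      have W0: "Wp w * (1 - alpha t w) = W t w" unfolding W_def Wp_def using a g by simp
      define R where "R = alpha t w * ((gradf (thetat t w) - g2 t w) \<bullet> (m t w - thetastar)) + zeta t w / 2 * (norm (g2 t w))\<^sup>2
           - 1 / (2 * Lhat) * (norm (g1 t w))\<^sup>2"
      have "Phi (Suc t) w \<le> (1 - alpha t w) * Phi t w + R" unfolding P1 using sp unfolding Phi_def R_def by linarith
      hence "Wp w * Phi (Suc t) w \<le> Wp w * ((1 - alpha t w) * Phi t w + R)"
        using Wp_pos[OF w] by (intro mult_left_mono) auto
      also have "\<dots> = (Wp w * (1 - alpha t w)) * Phi t w + Wp w * R" by (simp add: algebra_simps)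
      also have "\<dots> = W t w * Phi t w + Wp w * R" unfolding W0 ..
      finally show ?thesis unfolding Z_def Y_def W1 R_def by (simp add: algebra_simps)
    qed

    define A where "A n = {w \<in> space M. Wp w \<le> real n \<and> zeta t w \<le> real n \<and> norm (m t w - thetastar) \<le> real n}" for n :: nat
    have AF: "A n \<in> sets (F t)" for n
    proof -
      have "A n = {w \<in> space (F t). Wp w \<le> real n \<and> zeta t w \<le> real n \<and> norm (m t w - thetastar) \<le> real n}"
        unfolding A_def spF ..
      also have "\<dots> \<in> sets (F t)" by measurable
      finally show ?thesis .
    qed
    have AM[measurable]: "A n \<in> sets M" for n using AF sub unfolding subalgebra_def by blast
    have Asp: "A n \<subseteq> space M" for n unfolding A_def by auto
    define Ind where "Ind n w = (indicator (A n) w :: real)" for n w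
    have IndF[measurable]: "Ind n \<in> borel_measurable (F t)" for n
      unfolding Ind_def using AF by measurable
    note [measurable] = FM[OF IndF]
    have core: "(\<integral>\<^sup>+ w. ennreal (Ind n w * Z w) \<partial>M) \<le> (\<integral>\<^sup>+ w. ennreal (Y w) \<partial>M)" for n
    proof (cases "(\<integral>\<^sup>+ w. ennreal (Y w) \<partial>M) = \<infinity>")
      case True then show ?thesis by simp
    next
      case False
      define Yn where "Yn w = Ind n w * Y w" for w
      have Ynm[measurable]: "Yn \<in> borel_measurable M" unfolding Yn_def by measurable
      have Yn_le: "\<And>w. w \<in> space M \<Longrightarrow> 0 \<le> Yn w \<and> Yn w \<le> Y w"
        using Y_nn by (auto simp: Yn_def Ind_def indicator_def)
      have Yn_nn_le: "(\<integral>\<^sup>+ w. ennreal (Yn w) \<partial>M) \<le> (\<integral>\<^sup>+ w. ennreal (Y w) \<partial>M)"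
        by (rule nn_integral_mono) (use Yn_le in \<open>auto intro: ennreal_leI\<close>)
      have Yn_int: "integrable M Yn"
      proof (rule integrableI_bounded)
        have "(\<integral>\<^sup>+ w. ennreal (norm (Yn w)) \<partial>M) = (\<integral>\<^sup>+ w. ennreal (Yn w) \<partial>M)"
          by (rule nn_integral_cong) (use Yn_le in auto)
        also have "\<dots> < \<infinity>" using Yn_nn_le False by (simp add: less_top order.strict_trans1)
        finally show "(\<integral>\<^sup>+ w. ennreal (norm (Yn w)) \<partial>M) < \<infinity>" .
      qed measurable
      have Ind01: "\<And>w. 0 \<le> Ind n w \<and> Ind n w \<le> 1" by (simp add: Ind_def indicator_def)
      have bndWp: "\<bar>Ind n w * Wp w\<bar> \<le> real n" if w: "w \<in> space M" for w
        using Wp_pos[OF w] by (auto simp: Ind_def indicator_def A_def)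
      have bndZ: "\<bar>Ind n w * zeta t w\<bar> \<le> real n" if w: "w \<in> space M" for w
        using zeta_pos[OF t w] by (auto simp: Ind_def indicator_def A_def)
      have bndM: "\<And>w. w \<in> space M \<Longrightarrow> Ind n w * norm (m t w - thetastar) \<le> real n"
        by (auto simp: Ind_def indicator_def A_def)
      define hb where "hb b w = Ind n w * Wp w * alpha t w * ((m t w - thetastar) \<bullet> b)" for b w
      have hbm[measurable]: "hb b \<in> borel_measurable (F t)" for b unfolding hb_def by measurable
      note [measurable] = FM[OF hbm]
      have hb_bnd: "\<bar>hb b w\<bar> \<le> real n * real n" if b: "b \<in> Basis" and w: "w \<in> space M" for b w
      proof -
        have "\<bar>hb b w\<bar> = \<bar>Ind n w * Wp w\<bar> * \<bar>alpha t w\<bar> * \<bar>(m t w - thetastar) \<bullet> b\<bar>"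
          by (simp add: hb_def abs_mult)
        also have "\<dots> \<le> real n * 1 * (Ind n w * norm (m t w - thetastar)) \<or> Ind n w = 0"
        proof (cases "Ind n w = 0")
          case True then show ?thesis by simp
        next
          case False
          hence I1: "Ind n w = 1" by (simp add: Ind_def indicator_def split: if_splits)
          have "\<bar>Ind n w * Wp w\<bar> * \<bar>alpha t w\<bar> * \<bar>(m t w - thetastar) \<bullet> b\<bar> \<le> real n * 1 * (Ind n w * norm (m t w - thetastar))"
            unfolding I1 using bndWp[OF w] alpha_range[OF t w] Basis_le_norm[OF b, of "m t w - thetastar"] I1
            by (intro mult_mono) auto
          then show ?thesis by simp
        qed
        hence "\<bar>hb b w\<bar> \<le> real n * 1 * (Ind n w * norm (m t w - thetastar)) \<or> Ind n w = 0"
          using calculation by auto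
        then show ?thesis
        proof
          assume "\<bar>hb b w\<bar> \<le> real n * 1 * (Ind n w * norm (m t w - thetastar))"
          also have "\<dots> \<le> real n * real n" using bndM[OF w] by (simp add: mult_left_mono)
          finally show ?thesis .
        next
          assume "Ind n w = 0" then show ?thesis by (simp add: hb_def)
        qed
      qed
      have g2b_int: "integrable M (\<lambda>w. g2 t w \<bullet> b)" if b: "b \<in> Basis" for b
      proof (rule Bochner_Integration.integrable_bound)
        show "integrable M (\<lambda>w. 1 + (norm (g2 t w))\<^sup>2)" using g2_sq_int[OF t] by simp
        show "(\<lambda>w. g2 t w \<bullet> b) \<in> borel_measurable M" by measurable
        show "AE w in M. norm (g2 t w \<bullet> b) \<le> norm (1 + (norm (g2 t w))\<^sup>2)"
        proof (rule AE_I2)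
          fix w
          have "\<bar>g2 t w \<bullet> b\<bar> \<le> norm (g2 t w)" by (rule Basis_le_norm[OF b])
          also have "\<dots> \<le> 1 + (norm (g2 t w))\<^sup>2" by (rule le_one_plus_sq)
          finally show "norm (g2 t w \<bullet> b) \<le> norm (1 + (norm (g2 t w))\<^sup>2)" by simp
        qed
      qed
      have R1b: "integrable M (\<lambda>w. hb b w * (gradf (thetat t w) \<bullet> b)) \<and>
          integrable M (\<lambda>w. hb b w * (g2 t w \<bullet> b)) \<and>
          (\<integral>w. hb b w * (gradf (thetat t w) \<bullet> b) \<partial>M) = (\<integral>w. hb b w * (g2 t w \<bullet> b) \<partial>M)"
        if b: "b \<in> Basis" for b
      proof -
        have i1: "integrable M (\<lambda>w. hb b w * (g2 t w \<bullet> b))"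
          by (rule int_bdd_mult[OF g2b_int[OF b]]) (use hb_bnd[OF b] in auto)
        have ce: "integrable M (\<lambda>w. hb b w * real_cond_exp M (F t) (\<lambda>w. g2 t w \<bullet> b) w)"
          "(\<integral>w. hb b w * real_cond_exp M (F t) (\<lambda>w. g2 t w \<bullet> b) w \<partial>M) = (\<integral>w. hb b w * (g2 t w \<bullet> b) \<partial>M)"
          using S.real_cond_exp_intg[OF i1] by (auto)
        have ae: "AE w in M. hb b w * real_cond_exp M (F t) (\<lambda>w. g2 t w \<bullet> b) w = hb b w * (gradf (thetat t w) \<bullet> b)"
          using g2_unbiased[OF t b] by eventually_elim simp
        have i2: "integrable M (\<lambda>w. hb b w * (gradf (thetat t w) \<bullet> b))"
          using integrable_cong_AE[OF _ _ ae] ce(1) by simp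
        have "(\<integral>w. hb b w * (gradf (thetat t w) \<bullet> b) \<partial>M) = (\<integral>w. hb b w * real_cond_exp M (F t) (\<lambda>w. g2 t w \<bullet> b) w \<partial>M)"
          using integral_cong_AE[OF _ _ ae] by simp
        with ce(2) i1 i2 show ?thesis by simp
      qed
      define R1 where "R1 w = Ind n w * (Wp w * (alpha t w * ((gradf (thetat t w) - g2 t w) \<bullet> (m t w - thetastar))))" for w
      have R1_eq: "R1 w = (\<Sum>b\<in>Basis. hb b w * (gradf (thetat t w) \<bullet> b) - hb b w * (g2 t w \<bullet> b))" for w
      proof -
        define c where "c = Ind n w * Wp w * alpha t w"
        have "R1 w = c * ((gradf (thetat t w) - g2 t w) \<bullet> (m t w - thetastar))"
          unfolding R1_def c_def by (simp add: mult.assoc)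
        also have "\<dots> = c * (\<Sum>b\<in>Basis. ((gradf (thetat t w) - g2 t w) \<bullet> b) * ((m t w - thetastar) \<bullet> b))"
          by (subst euclidean_inner) simp
        also have "\<dots> = (\<Sum>b\<in>Basis. c * (((gradf (thetat t w) - g2 t w) \<bullet> b) * ((m t w - thetastar) \<bullet> b)))"
          by (rule sum_distrib_left)
        also have "\<dots> = (\<Sum>b\<in>Basis. hb b w * (gradf (thetat t w) \<bullet> b) - hb b w * (g2 t w \<bullet> b))"
        proof (rule sum.cong[OF refl])
          fix b :: 'd
          have "c * (((gradf (thetat t w) - g2 t w) \<bullet> b) * ((m t w - thetastar) \<bullet> b))
              = (c * ((m t w - thetastar) \<bullet> b)) * (gradf (thetat t w) \<bullet> b - g2 t w \<bullet> b)"
            by (simp add: inner_diff_left)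
          also have "\<dots> = hb b w * (gradf (thetat t w) \<bullet> b) - hb b w * (g2 t w \<bullet> b)"
            unfolding hb_def c_def by (simp add: right_diff_distrib)
          finally show "c * (((gradf (thetat t w) - g2 t w) \<bullet> b) * ((m t w - thetastar) \<bullet> b))
              = hb b w * (gradf (thetat t w) \<bullet> b) - hb b w * (g2 t w \<bullet> b)" .
        qed
        finally show ?thesis .
      qed
      have R1_int: "integrable M R1" and R1_zero: "(\<integral>w. R1 w \<partial>M) = 0"
      proof -
        have "integrable M (\<lambda>w. \<Sum>b\<in>Basis. hb b w * (gradf (thetat t w) \<bullet> b) - hb b w * (g2 t w \<bullet> b))"
          by (intro Bochner_Integration.integrable_sum Bochner_Integration.integrable_diff) (use R1b in auto)
        then show "integrable M R1" unfolding R1_eq[abs_def] .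
        have "(\<integral>w. R1 w \<partial>M) = (\<Sum>b\<in>Basis. (\<integral>w. hb b w * (gradf (thetat t w) \<bullet> b) - hb b w * (g2 t w \<bullet> b) \<partial>M))"
          unfolding R1_eq by (intro Bochner_Integration.integral_sum Bochner_Integration.integrable_diff) (use R1b in auto)
        also have "\<dots> = 0" using R1b by (intro sum.neutral ballI) (simp add: Bochner_Integration.integral_diff)
        finally show "(\<integral>w. R1 w \<partial>M) = 0" .
      qed
      define d2 where "d2 w = Ind n w * Wp w * zeta t w / 2" for w
      define d3 where "d3 w = Ind n w * Wp w / (2 * Lhat)" for w
      have d2m[measurable]: "d2 \<in> borel_measurable (F t)" unfolding d2_def by measurable
      have d3m[measurable]: "d3 \<in> borel_measurable (F t)" unfolding d3_def by measurable
      note [measurable] = FM[OF d2m] FM[OF d3m]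
      define R2 where "R2 w = d2 w * (norm (g2 t w))\<^sup>2" for w
      define R3 where "R3 w = d3 w * (norm (g1 t w))\<^sup>2" for w
      have d2b: "\<bar>d2 w\<bar> \<le> real n * real n" if w: "w \<in> space M" for w
      proof -
        have "\<bar>d2 w\<bar> = \<bar>Ind n w * Wp w\<bar> * \<bar>Ind n w * zeta t w\<bar> / 2"
          by (simp add: d2_def abs_mult Ind_def indicator_def)
        also have "\<dots> \<le> real n * real n / 2"
          using bndWp[OF w] bndZ[OF w] by (intro divide_right_mono mult_mono) auto
        also have "\<dots> \<le> real n * real n" by simp
        finally show ?thesis .
      qed
      have d3b: "\<bar>d3 w\<bar> \<le> real n / (2 * Lhat)" if w: "w \<in> space M" for w
        using bndWp[OF w] Lh by (simp add: d3_def abs_mult abs_divide divide_right_mono)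
      have i2: "integrable M R2" unfolding R2_def
        by (rule int_bdd_mult[OF g2_sq_int[OF t]]) (use d2b in auto)
      have i3: "integrable M R3" unfolding R3_def
        by (rule int_bdd_mult[OF g1_sq_int[OF t]]) (use d3b in auto)
      have ce2: "integrable M (\<lambda>w. d2 w * real_cond_exp M (F t) (\<lambda>w. (norm (g2 t w))\<^sup>2) w)"
          "(\<integral>w. d2 w * real_cond_exp M (F t) (\<lambda>w. (norm (g2 t w))\<^sup>2) w \<partial>M) = (\<integral>w. R2 w \<partial>M)"
        using S.real_cond_exp_intg[OF i2[unfolded R2_def]] by (auto simp: R2_def)
      have ce3: "integrable M (\<lambda>w. d3 w * real_cond_exp M (F t) (\<lambda>w. (norm (g1 t w))\<^sup>2) w)"
          "(\<integral>w. d3 w * real_cond_exp M (F t) (\<lambda>w. (norm (g1 t w))\<^sup>2) w \<partial>M) = (\<integral>w. R3 w \<partial>M)"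
        using S.real_cond_exp_intg[OF i3[unfolded R3_def]] by (auto simp: R3_def)
      have pos2: "AE w in M. 0 \<le> real_cond_exp M (F t) (\<lambda>w. (norm (g2 t w))\<^sup>2) w"
        by (rule S.real_cond_exp_pos) auto
      have "AE w in M. d2 w * real_cond_exp M (F t) (\<lambda>w. (norm (g2 t w))\<^sup>2) w
          \<le> d3 w * real_cond_exp M (F t) (\<lambda>w. (norm (g1 t w))\<^sup>2) w"
        using zeta_le[OF t] pos2
      proof eventually_elim
        case (elim w)
        define r1 where "r1 = real_cond_exp M (F t) (\<lambda>w. (norm (g1 t w))\<^sup>2) w"
        define r2 where "r2 = real_cond_exp M (F t) (\<lambda>w. (norm (g2 t w))\<^sup>2) w"
        have z: "zeta t w \<le> r1 / (Lhat * r2)" "0 \<le> r2" using elim by (auto simp: r1_def r2_def)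
        show ?case
        proof (cases "w \<in> space M")
          case False
          then show ?thesis using Asp by (auto simp: d2_def d3_def Ind_def indicator_def)
        next
          case True
          have zp: "0 < zeta t w" using zeta_pos[OF t True] .
          have r2p: "0 < r2"
          proof (rule ccontr)
            assume "\<not> 0 < r2" hence "r2 = 0" using z by simp
            thus False using z zp by simp
          qed
          have "zeta t w * (Lhat * r2) \<le> r1" using z(1) r2p Lh by (simp add: le_divide_eq)
          hence "zeta t w * r2 \<le> r1 / Lhat" using Lh by (simp add: le_divide_eq algebra_simps)
          moreover have "0 \<le> Ind n w * Wp w / 2" using Wp_pos[OF True] by (simp add: Ind_def)
          ultimately have "(Ind n w * Wp w / 2) * (zeta t w * r2) \<le> (Ind n w * Wp w / 2) * (r1 / Lhat)"
            by (rule mult_left_mono)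
          then show ?thesis unfolding r1_def[symmetric] r2_def[symmetric] d2_def d3_def
            by (simp add: algebra_simps)
        qed
      qed
      hence R23: "(\<integral>w. R2 w \<partial>M) \<le> (\<integral>w. R3 w \<partial>M)"
        using integral_mono_AE[OF ce2(1) ce3(1)] ce2(2) ce3(2) by simp
      define Q where "Q w = Yn w + R1 w + R2 w - R3 w" for w
      have Qint: "integrable M Q" unfolding Q_def[abs_def] using Yn_int R1_int i2 i3 by auto
      have IZ: "Ind n w * Z w \<le> Q w" if w: "w \<in> space M" for w
      proof (cases "w \<in> A n")
        case True
        then show ?thesis using key[OF w]
          by (simp add: Q_def Yn_def R1_def R2_def R3_def d2_def d3_def Ind_def)
      next
        case False
        then show ?thesis by (simp add: Q_def Yn_def R1_def R2_def R3_def d2_def d3_def Ind_def)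
      qed
      have Qnn: "AE w in M. 0 \<le> Q w"
      proof (rule AE_I2)
        fix w assume w: "w \<in> space M"
        have "0 \<le> Ind n w * Z w" using Z_nn[OF w] Ind01[of w] by simp
        also have "\<dots> \<le> Q w" by (rule IZ[OF w])
        finally show "0 \<le> Q w" .
      qed
      have "(\<integral>\<^sup>+ w. ennreal (Ind n w * Z w) \<partial>M) \<le> (\<integral>\<^sup>+ w. ennreal (Q w) \<partial>M)"
        by (rule nn_integral_mono) (use IZ in \<open>auto intro: ennreal_leI\<close>)
      also have "\<dots> = ennreal (\<integral>w. Q w \<partial>M)" by (rule nn_integral_eq_integral[OF Qint Qnn])
      also have "(\<integral>w. Q w \<partial>M) = (\<integral>w. Yn w \<partial>M) + (\<integral>w. R1 w \<partial>M) + (\<integral>w. R2 w \<partial>M) - (\<integral>w. R3 w \<partial>M)"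
        unfolding Q_def using Yn_int R1_int i2 i3 by (simp add: Bochner_Integration.integral_diff Bochner_Integration.integral_add)
      also have "\<dots> \<le> (\<integral>w. Yn w \<partial>M)" using R1_zero R23 by simp
      also have "ennreal (\<integral>w. Yn w \<partial>M) = (\<integral>\<^sup>+ w. ennreal (Yn w) \<partial>M)"
        by (rule nn_integral_eq_integral[symmetric]) (use Yn_int Yn_le in \<open>auto intro: AE_I2\<close>)
      also have "\<dots> \<le> (\<integral>\<^sup>+ w. ennreal (Y w) \<partial>M)" by (rule Yn_nn_le)
      finally show ?thesis by (simp add: ennreal_leI)
    qed

    have Zsup: "(\<integral>\<^sup>+ w. ennreal (Z w) \<partial>M) = (\<integral>\<^sup>+ w. (SUP n. ennreal (Ind n w * Z w)) \<partial>M)"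
    proof (rule nn_integral_cong)
      fix w assume w: "w \<in> space M"
      show "ennreal (Z w) = (SUP n. ennreal (Ind n w * Z w))"
      proof (rule antisym)
        obtain N1 :: nat where N1: "Wp w \<le> real N1" using real_arch_simple by blast
        obtain N2 :: nat where N2: "zeta t w \<le> real N2" using real_arch_simple by blast
        obtain N3 :: nat where N3: "norm (m t w - thetastar) \<le> real N3" using real_arch_simple by blast
        define N where "N = max N1 (max N2 N3)"
        have "w \<in> A N" unfolding A_def N_def using w N1 N2 N3
          by (auto simp: le_max_iff_disj intro: order_trans)
        hence "ennreal (Z w) = ennreal (Ind N w * Z w)" by (simp add: Ind_def)
        also have "\<dots> \<le> (SUP n. ennreal (Ind n w * Z w))" by (rule SUP_upper) simp
        finally show "ennreal (Z w) \<le> (SUP n. ennreal (Ind n w * Z w))" .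
      next
        show "(SUP n. ennreal (Ind n w * Z w)) \<le> ennreal (Z w)"
        proof (rule SUP_least)
          fix n show "ennreal (Ind n w * Z w) \<le> ennreal (Z w)"
            using Z_nn[OF w] by (intro ennreal_leI) (simp add: Ind_def indicator_def)
        qed
      qed
    qed
    have inc: "incseq (\<lambda>n w. ennreal (Ind n w * Z w))"
    proof (rule incseq_SucI, rule le_funI)
      fix n w
      show "ennreal (Ind n w * Z w) \<le> ennreal (Ind (Suc n) w * Z w)"
      proof (cases "w \<in> A n")
        case True
        hence "w \<in> A (Suc n)" unfolding A_def by (auto intro: order_trans)
        then show ?thesis using True by (simp add: Ind_def)
      next
        case False
        then show ?thesis by (simp add: Ind_def)
      qed
    qed
    have "(\<integral>\<^sup>+ w. ennreal (Z w) \<partial>M) = (SUP n. (\<integral>\<^sup>+ w. ennreal (Ind n w * Z w) \<partial>M))"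
      unfolding Zsup by (rule nn_integral_monotone_convergence_SUP[OF inc]) measurable
    also have "\<dots> \<le> (\<integral>\<^sup>+ w. ennreal (Y w) \<partial>M)" by (rule SUP_least) (rule core)
    finally show ?thesis unfolding Z_def Y_def .
  qed
  have lyap: "(\<integral>\<^sup>+ w. ennreal (W t w * Phi t w) \<partial>M) \<le> ennreal C" if "t \<le> T" for t
    using that
  proof (induction t)
    case 0
    have "(\<integral>\<^sup>+ w. ennreal (W 0 w * Phi 0 w) \<partial>M) = (\<integral>\<^sup>+ w. ennreal C \<partial>M)"
      by (rule nn_integral_cong) (use gamma0 in \<open>simp add: W_def Phi_def C_def init_gamma init_theta init_m\<close>)
    also have "\<dots> = ennreal C" using P.emeasure_space_1 by simp
    finally show ?case by simp
  next
    case (Suc t)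
    then show ?case using step[of t] by simp
  qed
  have "(\<integral>\<^sup>+ w. ennreal ((f (theta T w) - f thetastar)
            * (1 + sqrt gamma0 / 2 * (\<Sum>t<T. sqrt (zeta t w)))\<^sup>2) \<partial>M)
      \<le> (\<integral>\<^sup>+ w. ennreal (W T w * Phi T w) \<partial>M)"
  proof (rule nn_integral_mono)
    fix w assume w: "w \<in> space M"
    define S where "S = (\<Sum>t<T. sqrt (zeta t w))"
    have gT: "gamma T w > 0" using gpos[OF _ w] by simp
    have S0: "0 \<le> S" unfolding S_def using zeta_pos[OF _ w] by (intro sum_nonneg) (simp add: less_imp_le)
    have b: "1 / sqrt gamma0 + S / 2 \<le> 1 / sqrt (gamma T w)" using sqb[OF _ w] by (simp add: S_def)
    have "1 + sqrt gamma0 / 2 * S = sqrt gamma0 * (1 / sqrt gamma0 + S / 2)" using gamma0 by (simp add: field_simps)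
    also have "\<dots> \<le> sqrt gamma0 * (1 / sqrt (gamma T w))" using b gamma0 by (intro mult_left_mono) auto
    also have "\<dots> = sqrt (W T w)" using gT gamma0 by (simp add: W_def real_sqrt_divide)
    finally have "(1 + sqrt gamma0 / 2 * S)\<^sup>2 \<le> (sqrt (W T w))\<^sup>2"
      using S0 gamma0 by (intro power_mono) auto
    also have "\<dots> = W T w" using gT gamma0 by (simp add: W_def)
    finally have B: "(1 + sqrt gamma0 / 2 * S)\<^sup>2 \<le> W T w" .
    have f0: "0 \<le> f (theta T w) - f thetastar" using minimizer by simp
    have "(f (theta T w) - f thetastar) * (1 + sqrt gamma0 / 2 * S)\<^sup>2 \<le> (f (theta T w) - f thetastar) * W T w"
      using B f0 by (rule mult_left_mono)
    also have "\<dots> \<le> Phi T w * W T w" using Phi_nn[OF _ w, of T] gT gamma0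
      by (intro mult_right_mono) (auto simp: W_def)
    finally show "ennreal ((f (theta T w) - f thetastar) * (1 + sqrt gamma0 / 2 * (\<Sum>t<T. sqrt (zeta t w)))\<^sup>2)
        \<le> ennreal (W T w * Phi T w)"
      by (intro ennreal_leI) (simp add: S_def mult.commute)
  qed
  also have "\<dots> \<le> ennreal C" by (rule lyap) simp
  finally show ?thesis unfolding C_def .
qed

end
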